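(* Let $P$ be an orthogonal polygon with $n$ corners. Then $P$ can be divided into at most $\frac{3}{4}n-2$ rectangular pieces by adding only vertical line segments to the interior of $P$. If $P$ is a polyomino, the rectangular pieces can be chosen to be polyominos as well.
   Context: An orthogonal polygon is a polygonal region, possibly with holes, all of whose edges are axis-parallel. A cell is a unit square $[i,i+1]\times[j,j+1]$ with $i,j\in\mathbb{Z}$. A polyomino is a finite union of cells. *)

theory Defs
  imports "HOL-Analysis.Analysis"
begin

definition is_rectangle :: "(real \<times> real) set \<Rightarrow> bool" where
  "is_rectangle R \<longleftrightarrow> (\<exists>a b c d. a < c \<and> b < d \<and> R = cbox (a, b) (c, d))"

definition cell :: "int \<Rightarrow> int \<Rightarrow> (real \<times> real) set" where
  "cell i j = cbox (of_int i, of_int j) (of_int i + 1, of_int j + 1)"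

definition is_polyomino :: "(real \<times> real) set \<Rightarrow> bool" where
  "is_polyomino P \<longleftrightarrow> (\<exists>C :: (int \<times> int) set. finite C \<and> P = (\<Union>(i, j)\<in>C. cell i j))"

definition quadrant_in :: "(real \<times> real) set \<Rightarrow> real \<times> real \<Rightarrow> real \<Rightarrow> real \<Rightarrow> bool" where
  "quadrant_in P p s t \<longleftrightarrow> (\<exists>e>0. \<forall>u v. 0 < s * (u - fst p) \<and> s * (u - fst p) < e \<and>
       0 < t * (v - snd p) \<and> t * (v - snd p) < e \<longrightarrow> (u, v) \<in> P)"

definition signs :: "(real \<times> real) set" where
  "signs = {-1, 1} \<times> {-1, 1}"

definition quadrants_in :: "(real \<times> real) set \<Rightarrow> real \<times> real \<Rightarrow> (real \<times> real) set" where
  "quadrants_in P p = {(s, t) \<in> signs. quadrant_in P p s t}"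

text \<open>A corner: the boundary turns by 90 degrees, i.e. locally P occupies exactly one or three quadrants.\<close>
definition corners :: "(real \<times> real) set \<Rightarrow> (real \<times> real) set" where
  "corners P = {p. card (quadrants_in P p) = 1 \<or> card (quadrants_in P p) = 3}"

text \<open>Orthogonal polygon (possibly with holes): a finite union of nondegenerate axis-parallel
  rectangles with connected nonempty interior whose boundary has no pinch points
  (locally exactly two diagonally opposite quadrants), so that the boundary consists of
  disjoint simple closed axis-parallel polygonal curves.\<close>
definition orthogonal_polygon :: "(real \<times> real) set \<Rightarrow> bool" where
  "orthogonal_polygon P \<longleftrightarrow>
     (\<exists>\<R>. finite \<R> \<and> \<R> \<noteq> {} \<and> (\<forall>R\<in>\<R>. is_rectangle R) \<and> P = \<Union>\<R>) \<and>
     connected (interior P) \<and>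
     (\<forall>p. quadrants_in P p \<noteq> {(1, 1), (-1, -1)} \<and> quadrants_in P p \<noteq> {(1, -1), (-1, 1)})"

definition vseg :: "real \<Rightarrow> real \<Rightarrow> real \<Rightarrow> (real \<times> real) set" where
  "vseg x a b = {(x, y) | y. a \<le> y \<and> y \<le> b}"

definition pieces :: "(real \<times> real) set \<Rightarrow> (real \<times> real \<times> real) set \<Rightarrow> (real \<times> real) set set" where
  "pieces P S = closure ` components (interior P - (\<Union>(x, a, b)\<in>S. vseg x a b))"

definition vertical_division :: "(real \<times> real) set \<Rightarrow> (real \<times> real \<times> real) set \<Rightarrow> bool" where
  "vertical_division P S \<longleftrightarrow> finite S \<and> (\<forall>(x, a, b)\<in>S. a < b \<and> vseg x a b \<subseteq> P) \<and>
     finite (pieces P S) \<and> (\<forall>R\<in>pieces P S. is_rectangle R)"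

end

theory Submission
  imports Defs
begin
type_synonym rt = "real \<times> real \<times> real \<times> real"

fun rect :: "rt \<Rightarrow> (real\<times>real) set" where "rect (a,b,c,d) = cbox (a,b) (c,d)"
fun obox :: "rt \<Rightarrow> (real\<times>real) set" where "obox (a,b,c,d) = box (a,b) (c,d)"
fun valid :: "rt \<Rightarrow> bool" where "valid (a,b,c,d) \<longleftrightarrow> a < c \<and> b < d"
fun ovl :: "rt \<Rightarrow> rt \<Rightarrow> bool" where
  "ovl (a,b,c,d) (a',b',c',d') \<longleftrightarrow> a < c' \<and> a' < c \<and> b < d' \<and> b' < d"
fun ext :: "rt \<Rightarrow> real \<times> real \<Rightarrow> real \<Rightarrow> real \<Rightarrow> bool" where
  "ext (a,b,c,d) (x,y) s t \<longleftrightarrow> a \<le> x \<and> x \<le> c \<and> b \<le> y \<and> y \<le> d \<and>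
     (if s = 1 then x < c else a < x) \<and> (if t = 1 then y < d else b < y)"

lemma mem_rect: "(x,y) \<in> rect (a,b,c,d) \<longleftrightarrow> a \<le> x \<and> x \<le> c \<and> b \<le> y \<and> y \<le> d"
  by auto

lemma mem_box2: "((x::real),(y::real)) \<in> box (a,b) (c,d) \<longleftrightarrow> a < x \<and> x < c \<and> b < y \<and> y < d"
  by (auto simp: mem_box Basis_prod_def ball_Un inner_Pair Basis_real_def)

lemma quadrant_F:
  assumes fin: "finite F" and PU: "P = \<Union>(rect ` F)"
    and s: "s \<in> {-1,1}" and t: "t \<in> {-1,1}"
  shows "quadrant_in P p s t \<longleftrightarrow> (\<exists>M\<in>F. ext M p s t)"
proof
  obtain x y where p: "p = (x,y)" by (cases p)
  assume "\<exists>M\<in>F. ext M p s t"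
  then obtain M where M: "M \<in> F" "ext M p s t" by blast
  obtain a b c d where Md: "M = (a,b,c,d)" by (cases M)
  define e where "e = min (if s = 1 then c - x else x - a) (if t = 1 then d - y else y - b)"
  have e: "e > 0" using M Md p s t by (auto simp: e_def)
  have "\<forall>u v. 0 < s * (u - fst p) \<and> s * (u - fst p) < e \<and>
       0 < t * (v - snd p) \<and> t * (v - snd p) < e \<longrightarrow> (u, v) \<in> P"
  proof (intro allI impI)
    fix u v assume H: "0 < s * (u - fst p) \<and> s * (u - fst p) < e \<and>
       0 < t * (v - snd p) \<and> t * (v - snd p) < e"
    have "(u,v) \<in> rect M"
      using H M Md p s t unfolding e_def by (auto simp: mem_rect split: if_splits)
    then show "(u,v) \<in> P" using M PU by blast
  qed
  then show "quadrant_in P p s t" unfolding quadrant_in_def using e by blast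
next
  obtain x y where p: "p = (x,y)" by (cases p)
  assume "quadrant_in P p s t"
  then obtain e where e: "e > 0" and eP: "\<And>u v. 0 < s * (u - x) \<Longrightarrow> s * (u - x) < e \<Longrightarrow>
       0 < t * (v - y) \<Longrightarrow> t * (v - y) < e \<Longrightarrow> (u, v) \<in> P"
    unfolding quadrant_in_def p by auto
  define D where "D = insert e ((\<Union>M\<in>F. case M of (a,b,c,d) \<Rightarrow> {\<bar>a-x\<bar>, \<bar>c-x\<bar>, \<bar>b-y\<bar>, \<bar>d-y\<bar>}) - {0})"
  have Dfin: "finite D" unfolding D_def using fin by (auto split: prod.splits)
  have Dpos: "\<forall>z\<in>D. z > 0" unfolding D_def using e by (auto split: prod.splits)
  define \<delta> where "\<delta> = Min D / 2"
  have Dne: "D \<noteq> {}" unfolding D_def by auto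
  have MinD: "Min D \<in> D" "\<forall>z\<in>D. Min D \<le> z" using Min_in[OF Dfin Dne] Min_le[OF Dfin] by auto
  have dpos: "\<delta> > 0" using MinD Dpos by (auto simp: \<delta>_def)
  have dle: "\<delta> < e" using MinD dpos unfolding \<delta>_def D_def by auto
  have key: "z = 0 \<or> 2 * \<delta> \<le> \<bar>z\<bar>" if "z \<in> {\<bar>a-x\<bar>, \<bar>c-x\<bar>, \<bar>b-y\<bar>, \<bar>d-y\<bar>}" "(a,b,c,d) \<in> F" for z a b c d
  proof (cases "z = 0")
    case False
    then have "z \<in> D" unfolding D_def using that by fastforce
    then show ?thesis using MinD unfolding \<delta>_def by auto
  qed simp
  have "(x + s * \<delta>, y + t * \<delta>) \<in> P"
    apply (rule eP) using s t dpos dle by auto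
  then obtain M where M: "M \<in> F" "(x + s * \<delta>, y + t * \<delta>) \<in> rect M" using PU by auto
  obtain a b c d where Md: "M = (a,b,c,d)" by (cases M)
  have k1: "\<bar>a-x\<bar> = 0 \<or> 2 * \<delta> \<le> \<bar>a-x\<bar>" using key[of "\<bar>a-x\<bar>" a c b d] M Md by auto
  have k2: "\<bar>c-x\<bar> = 0 \<or> 2 * \<delta> \<le> \<bar>c-x\<bar>" using key[of "\<bar>c-x\<bar>" a c b d] M Md by auto
  have k3: "\<bar>b-y\<bar> = 0 \<or> 2 * \<delta> \<le> \<bar>b-y\<bar>" using key[of "\<bar>b-y\<bar>" a c b d] M Md by auto
  have k4: "\<bar>d-y\<bar> = 0 \<or> 2 * \<delta> \<le> \<bar>d-y\<bar>" using key[of "\<bar>d-y\<bar>" a c b d] M Md by auto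
  have "ext M p s t"
    using M(2) Md p s t k1 k2 k3 k4 dpos by (auto simp: mem_rect abs_if split: if_splits)
  then show "\<exists>M\<in>F. ext M p s t" using M by blast
qed


definition disj :: "rt set \<Rightarrow> bool" where
  "disj F \<longleftrightarrow> (\<forall>M\<in>F. \<forall>N\<in>F. ovl M N \<longrightarrow> M = N)"

definition a2 :: "(real \<times> real) set \<Rightarrow> rt set \<Rightarrow> bool" where
  "a2 P F \<longleftrightarrow> (\<forall>a b c d u. (a,b,c,d) \<in> F \<longrightarrow>
     ((a \<le> u \<and> u < c) \<longrightarrow> \<not> quadrant_in P (u,d) 1 1 \<and> \<not> quadrant_in P (u,b) 1 (-1)) \<and>
     ((a < u \<and> u \<le> c) \<longrightarrow> \<not> quadrant_in P (u,d) (-1) 1 \<and> \<not> quadrant_in P (u,b) (-1) (-1)))"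

definition a3 :: "rt set \<Rightarrow> bool" where
  "a3 F \<longleftrightarrow> (\<forall>a b c d e. (a,b,c,d) \<in> F \<longrightarrow> (c,b,e,d) \<notin> F)"

definition intok :: "rt set \<Rightarrow> bool" where
  "intok F \<longleftrightarrow> (\<forall>a b c d. (a,b,c,d) \<in> F \<longrightarrow> a \<in> \<int> \<and> b \<in> \<int> \<and> c \<in> \<int> \<and> d \<in> \<int>)"

definition good :: "(real \<times> real) set \<Rightarrow> rt set \<Rightarrow> bool" where
  "good P F \<longleftrightarrow> finite F \<and> F \<noteq> {} \<and> (\<forall>M\<in>F. valid M) \<and> P = \<Union>(rect ` F) \<and> disj F"

lemma interior_quad:
  assumes "z \<in> interior P" "s \<in> {-1,1}" "t \<in> {-1,1}"
  shows "quadrant_in P z s t"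
proof -
  obtain x y where z: "z = (x,y)" by (cases z)
  obtain lo hi where B: "box lo hi \<subseteq> interior P" "z \<in> box lo hi"
    using open_contains_box[OF open_interior assms(1)] by metis
  obtain a b where lo: "lo = (a,b)" by (cases lo)
  obtain c d where hi: "hi = (c,d)" by (cases hi)
  have in1: "a < x" "x < c" "b < y" "y < d" using B(2) z lo hi mem_box2 by auto
  define e where "e = min (min (x - a) (c - x)) (min (y - b) (d - y))"
  have e: "e > 0" using in1 by (auto simp: e_def)
  have "(u,v) \<in> P" if H: "0 < s * (u - x)" "s * (u - x) < e" "0 < t * (v - y)" "t * (v - y) < e" for u v
  proof -
    have "(u,v) \<in> box lo hi" using H assms(2,3) unfolding lo hi mem_box2 e_def by auto
    then show ?thesis using B(1) interior_subset by blast
  qed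
  then show ?thesis unfolding quadrant_in_def z using e by auto
qed

lemma valid_rect_inj:
  assumes "valid M" "valid N" "rect M = rect N" shows "M = N"
proof -
  obtain a b c d where M: "M = (a,b,c,d)" by (cases M)
  obtain a' b' c' d' where N: "N = (a',b',c',d')" by (cases N)
  have v: "a < c" "b < d" "a' < c'" "b' < d'" using assms M N by auto
  have "(a,b) \<in> rect N" "(c,d) \<in> rect N" "(a',b') \<in> rect M" "(c',d') \<in> rect M"
    using assms(3) M N v by (metis mem_rect order.refl less_imp_le)+
  then show ?thesis using M N by (auto simp: mem_rect)
qed

lemma is_rectangle_rect: "valid M \<Longrightarrow> is_rectangle (rect M)"
  by (cases M) (auto simp: is_rectangle_def)

definition segs :: "rt set \<Rightarrow> (real \<times> real \<times> real) set" where
  "segs F = (\<lambda>(a,b,c,d). (a,b,d)) ` F \<union> (\<lambda>(a,b,c,d). (c,b,d)) ` F"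

lemma obox_disj:
  assumes "\<not> ovl M N" shows "obox M \<inter> obox N = {}"
proof -
  obtain a b c d where M: "M = (a,b,c,d)" by (cases M)
  obtain a' b' c' d' where N: "N = (a',b',c',d')" by (cases N)
  show ?thesis using assms unfolding M N by (auto simp: mem_box2)
qed

lemma part_T:
  assumes g: "good P F" and A2: "a2 P F"
  shows "vertical_division P (segs F) \<and> pieces P (segs F) = rect ` F"
proof -
  have fin: "finite F" and val: "\<forall>M\<in>F. valid M" and PU: "P = \<Union>(rect ` F)" and dj: "disj F"
    using g by (auto simp: good_def)
  have segsub: "a < b \<and> vseg x a b \<subseteq> P" if xs: "(x,a,b) \<in> segs F" for x a b
  proof -
    obtain M where M: "M \<in> F" "(x,a,b) = (\<lambda>(a,b,c,d). (a,b,d)) M \<or> (x,a,b) = (\<lambda>(a,b,c,d). (c,b,d)) M"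
      using xs unfolding segs_def by blast
    obtain a0 b0 c0 d0 where Md: "M = (a0,b0,c0,d0)" by (cases M)
    have "vseg x a b \<subseteq> rect M" "a < b" using M Md val by (auto simp: vseg_def mem_rect)
    then show ?thesis using M PU by blast
  qed
  define U where "U = interior P - (\<Union>(x, a, b)\<in>segs F. vseg x a b)"
  have U: "U = \<Union>(obox ` F)"
  proof
    show "U \<subseteq> \<Union>(obox ` F)"
    proof
      fix z assume zU: "z \<in> U"
      obtain x y where z: "z = (x,y)" by (cases z)
      have zi: "z \<in> interior P" and zs: "\<And>x a b. (x,a,b) \<in> segs F \<Longrightarrow> z \<notin> vseg x a b"
        using zU unfolding U_def by auto
      obtain M where M: "M \<in> F" "z \<in> rect M" using zi interior_subset PU by blast
      obtain a b c d where Md: "M = (a,b,c,d)" by (cases M)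
      have r: "a \<le> x" "x \<le> c" "b \<le> y" "y \<le> d" using M Md z by (auto simp: mem_rect)
      have "(a,b,d) \<in> segs F" "(c,b,d) \<in> segs F" using M Md unfolding segs_def by force+
      then have "x \<noteq> a" "x \<noteq> c" using zs r z by (auto simp: vseg_def)
      moreover have "y \<noteq> d"
      proof
        assume "y = d"
        then have "\<not> quadrant_in P z 1 1" using A2 M Md r \<open>x \<noteq> c\<close> z unfolding a2_def by auto
        then show False using interior_quad[OF zi] by auto
      qed
      moreover have "y \<noteq> b"
      proof
        assume "y = b"
        then have "\<not> quadrant_in P z 1 (-1)" using A2 M Md r \<open>x \<noteq> c\<close> z unfolding a2_def by auto
        then show False using interior_quad[OF zi] by auto
      qed
      ultimately have "z \<in> obox M" using r z Md by (auto simp: mem_box2)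
      then show "z \<in> \<Union>(obox ` F)" using M by blast
    qed
  next
    show "\<Union>(obox ` F) \<subseteq> U"
    proof
      fix z assume "z \<in> \<Union>(obox ` F)"
      then obtain M where M: "M \<in> F" "z \<in> obox M" by blast
      obtain a b c d where Md: "M = (a,b,c,d)" by (cases M)
      have "obox M = interior (rect M)" using Md by simp
      also have "\<dots> \<subseteq> interior P" using M PU by (intro interior_mono) blast
      finally have zi: "z \<in> interior P" using M by blast
      have "z \<notin> vseg x0 a0 b0" if xs: "(x0,a0,b0) \<in> segs F" for x0 a0 b0
      proof
        assume zv: "z \<in> vseg x0 a0 b0"
        obtain N where N: "N \<in> F" "(x0,a0,b0) = (\<lambda>(a,b,c,d). (a,b,d)) N \<or> (x0,a0,b0) = (\<lambda>(a,b,c,d). (c,b,d)) N"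
          using xs unfolding segs_def by blast
        obtain a' b' c' d' where Nd: "N = (a',b',c',d')" by (cases N)
        have vN: "a' < c'" "b' < d'" using val N Nd by auto
        have "ovl M N" using M(2) zv N(2) Md Nd vN by (auto simp: mem_box2 vseg_def)
        then have "M = N" using dj M N unfolding disj_def by blast
        then show False using M(2) zv N(2) Md Nd vN by (auto simp: mem_box2 vseg_def)
      qed
      then show "z \<in> U" using zi unfolding U_def by blast
    qed
  qed
  have comp: "components U = obox ` F"
    unfolding U
  proof (rule components_open_unique)
    show "pairwise disjnt (obox ` F)"
    proof (rule pairwiseI)
      fix X Y assume "X \<in> obox ` F" "Y \<in> obox ` F" "X \<noteq> Y"
      then obtain M N where "M \<in> F" "N \<in> F" "X = obox M" "Y = obox N" "M \<noteq> N" by blast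
      then show "disjnt X Y" using dj obox_disj unfolding disj_def disjnt_def by blast
    qed
    show "open X \<and> connected X \<and> X \<noteq> {}" if "X \<in> obox ` F" for X
    proof -
      obtain M where M: "M \<in> F" "X = obox M" using \<open>X \<in> obox ` F\<close> by blast
      obtain a b c d where Md: "M = (a,b,c,d)" by (cases M)
      have "((a+c)/2, (b+d)/2) \<in> X" using val M Md by (auto simp: mem_box2)
      then show ?thesis using M Md by (auto intro: convex_connected)
    qed
  qed simp
  have pcs: "pieces P (segs F) = rect ` F"
  proof -
    have "pieces P (segs F) = closure ` obox ` F" unfolding pieces_def comp[unfolded U_def] ..
    also have "\<dots> = rect ` F"
    proof -
      have "closure (obox M) = rect M" if "M \<in> F" for M
      proof -
        obtain a b c d where Md: "M = (a,b,c,d)" by (cases M)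
        have "((a+c)/2, (b+d)/2) \<in> obox M" using val that Md by (auto simp: mem_box2)
        then have "box (a,b) (c,d) \<noteq> {}" using Md by auto
        then show ?thesis using Md by simp
      qed
      then show ?thesis unfolding image_image by (intro image_cong) auto
    qed
    finally show ?thesis .
  qed
  have "finite (segs F)" using fin unfolding segs_def by auto
  then have "vertical_division P (segs F)"
    unfolding vertical_division_def pcs using segsub fin val is_rectangle_rect by auto
  then show ?thesis using pcs by blast
qed

fun cor :: "rt \<Rightarrow> real \<Rightarrow> real \<Rightarrow> real \<times> real" where
  "cor (a,b,c,d) s t = (if s = 1 then a else c, if t = 1 then b else d)"

lemma sgn2: "s \<in> {-1,1} \<longleftrightarrow> s = 1 \<or> s = (-1::real)" by auto

lemma ext_cor: "valid M \<Longrightarrow> s \<in> {-1,1} \<Longrightarrow> t \<in> {-1,1} \<Longrightarrow> ext M (cor M s t) s t"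
  by (cases M) auto

lemma cor_not1: "valid M \<Longrightarrow> s \<in> {-1,1} \<Longrightarrow> t \<in> {-1,1} \<Longrightarrow> \<not> ext M (cor M s t) (-s) t'"
  by (cases M) auto

lemma cor_not2: "valid M \<Longrightarrow> s \<in> {-1,1} \<Longrightarrow> t \<in> {-1,1} \<Longrightarrow> \<not> ext M (cor M s t) s' (-t)"
  by (cases M) auto

lemma same_ovl: "ext M p s t \<Longrightarrow> ext N p s t \<Longrightarrow> s \<in> {-1,1} \<Longrightarrow> t \<in> {-1,1} \<Longrightarrow> ovl M N"
  by (cases M; cases N; cases p) (auto split: if_splits)

lemma cor_inj: "valid M \<Longrightarrow> cor M s t = cor M s' t' \<Longrightarrow> s \<in> {-1,1} \<Longrightarrow> t \<in> {-1,1} \<Longrightarrow>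
   s' \<in> {-1,1} \<Longrightarrow> t' \<in> {-1,1} \<Longrightarrow> s = s' \<and> t = t'"
  by (cases M) (auto split: if_splits)

lemma flip_a2:
  assumes "a2 P F" "M \<in> F" "valid M" "s \<in> {-1,1}" "t \<in> {-1,1}"
  shows "\<not> quadrant_in P (cor M s t) s (-t)"
proof -
  obtain a b c d where Md: "M = (a,b,c,d)" by (cases M)
  have v: "a < c" "b < d" using assms(3) Md by auto
  have H: "\<And>u. (a \<le> u \<and> u < c) \<longrightarrow> \<not> quadrant_in P (u,d) 1 1 \<and> \<not> quadrant_in P (u,b) 1 (-1)"
     "\<And>u. (a < u \<and> u \<le> c) \<longrightarrow> \<not> quadrant_in P (u,d) (-1) 1 \<and> \<not> quadrant_in P (u,b) (-1) (-1)"
    using assms(1,2) Md unfolding a2_def by blast+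
  show ?thesis using assms(4,5) H[of a] H[of c] v Md by auto
qed

lemma core_cor:
  assumes "valid N" "s \<in> {-1,1}" "t \<in> {-1,1}" "ext N p (-s) t" "\<not> ext N p s t" "\<not> ext N p (-s) (-t)"
  shows "p = cor N (-s) t"
  using assms by (cases N; cases p) (auto split: if_splits)

lemma reflex_core:
  assumes "valid K" "valid L" "s \<in> {-1,1}" "t \<in> {-1,1}" "p = cor K s t" "p = cor L (-s) t"
    "t * (snd (cor K s (-t)) - snd (cor L (-s) (-t))) < 0"
  shows "ext L (cor K s (-t)) (-s) t \<and> ext L (cor K s (-t)) (-s) (-t)"
  using assms by (cases K; cases L; cases p) (auto split: if_splits)

lemma a3_core:
  assumes "a3 F" "M \<in> F" "N \<in> F" "s \<in> {-1,1}" "t \<in> {-1,1}" "cor M s t = cor N (-s) t"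
  shows "snd (cor M s (-t)) \<noteq> snd (cor N (-s) (-t))"
proof -
  obtain a b c d where Md: "M = (a,b,c,d)" by (cases M)
  obtain a' b' c' d' where Nd: "N = (a',b',c',d')" by (cases N)
  have "\<And>a b c d e. (a,b,c,d) \<in> F \<Longrightarrow> (c,b,e,d) \<notin> F" using assms(1) unfolding a3_def by blast
  then show ?thesis using assms(2-6) Md Nd by (auto split: if_splits)
qed

lemma signs_card: "card signs = 4"
  unfolding signs_def by (simp add: card_cartesian_product)

lemma signs_fin: "finite signs" unfolding signs_def by simp

lemma mem_signs: "(s,t) \<in> signs \<longleftrightarrow> s \<in> {-1,1} \<and> t \<in> {-1,1}"
  unfolding signs_def by auto

lemma QE:
  assumes "good P F"
  shows "(s,t) \<in> quadrants_in P p \<longleftrightarrow> (s,t) \<in> signs \<and> (\<exists>M\<in>F. ext M p s t)"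
proof -
  have F: "finite F" "P = \<Union>(rect ` F)" using assms by (auto simp: good_def)
  show ?thesis
  proof (cases "s \<in> {-1,1} \<and> t \<in> {-1,1}")
    case True
    then show ?thesis unfolding quadrants_in_def mem_signs using quadrant_F[OF F, of s t p] by auto
  next
    case False
    then show ?thesis unfolding quadrants_in_def mem_signs by auto
  qed
qed

lemma Q_sub: "quadrants_in P p \<subseteq> signs" unfolding quadrants_in_def by auto

lemma Q_fin: "finite (quadrants_in P p)" using Q_sub signs_fin finite_subset by blast

lemma card_signs_minus1: "x \<in> signs \<Longrightarrow> card (signs - {x}) = 3"
  using signs_card signs_fin by (simp add: card_Diff_singleton)

lemma card_signs_minus2: "x \<in> signs \<Longrightarrow> y \<in> signs \<Longrightarrow> x \<noteq> y \<Longrightarrow> card (signs - {x,y}) = 2"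
proof -
  assume "x \<in> signs" "y \<in> signs" "x \<noteq> y"
  then have "card (signs - {x} - {y}) = 2" using signs_card signs_fin
    by (simp add: card_Diff_singleton)
  then show ?thesis by (metis Diff_insert2 insert_is_Un)
qed

lemma card3:
  assumes "a \<noteq> b" "a \<noteq> c" "b \<noteq> c" "{a,b,c} \<subseteq> A" "A \<subseteq> signs - {x}" "x \<in> signs"
  shows "card A = 3"
proof -
  have "card A \<le> 3" using card_mono[OF _ assms(5)] card_signs_minus1[OF assms(6)] signs_fin by auto
  moreover have "card {a,b,c} \<le> card A" using card_mono[OF _ assms(4)] signs_fin assms(5)
    finite_subset by blast
  ultimately show ?thesis using assms(1-3) by auto
qed



lemma single_Q:
  assumes g: "good P F" and "M \<in> F" "ext M p s t" "(s,t) \<in> signs"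
    and u: "\<And>N s' t'. N \<in> F \<Longrightarrow> ext N p s' t' \<Longrightarrow> (s',t') \<in> signs \<Longrightarrow> s' = s \<and> t' = t"
  shows "card (quadrants_in P p) = 1"
proof -
  have "quadrants_in P p = {(s,t)}"
  proof
    show "quadrants_in P p \<subseteq> {(s,t)}"
    proof
      fix x assume x: "x \<in> quadrants_in P p"
      obtain s' t' where xs: "x = (s',t')" by (cases x)
      then obtain N where "N \<in> F" "ext N p s' t'" "(s',t') \<in> signs" using x QE[OF g] by auto
      then show "x \<in> {(s,t)}" using u xs by auto
    qed
    show "{(s,t)} \<subseteq> quadrants_in P p" using QE[OF g] assms(2-4) by auto
  qed
  then show ?thesis by simp
qed

lemma convex4:
  assumes g: "good P F"
  shows "\<exists>C. C \<subseteq> {q. card (quadrants_in P q) = 1} \<and> card C = 4"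
proof -
  have fin: "finite F" and ne: "F \<noteq> {}" and val: "\<And>M. M \<in> F \<Longrightarrow> valid M"
    using g by (auto simp: good_def)
  define lf :: "rt \<Rightarrow> real" where "lf = (\<lambda>M. fst M)"
  define bt :: "rt \<Rightarrow> real" where "bt = (\<lambda>M. fst (snd M))"
  define rg :: "rt \<Rightarrow> real" where "rg = (\<lambda>M. fst (snd (snd M)))"
  define tp :: "rt \<Rightarrow> real" where "tp = (\<lambda>M. snd (snd (snd M)))"
  have vv: "lf M < rg M" "bt M < tp M" if "M \<in> F" for M
    using val[OF that] unfolding lf_def bt_def rg_def tp_def by (cases M; auto)+
  define a0 where "a0 = Min (lf ` F)"
  define c0 where "c0 = Max (rg ` F)"
  define F0 where "F0 = {M \<in> F. lf M = a0}"
  define F1 where "F1 = {M \<in> F. rg M = c0}"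
  have a0le: "\<And>M. M \<in> F \<Longrightarrow> a0 \<le> lf M" unfolding a0_def using fin by auto
  have c0ge: "\<And>M. M \<in> F \<Longrightarrow> rg M \<le> c0" unfolding c0_def using fin by auto
  have "a0 \<in> lf ` F" unfolding a0_def using fin ne by auto
  then have F0ne: "F0 \<noteq> {}" unfolding F0_def by auto
  have "c0 \<in> rg ` F" unfolding c0_def using fin ne by auto
  then have F1ne: "F1 \<noteq> {}" unfolding F1_def by auto
  have F0fin: "finite F0" "finite F1" using fin unfolding F0_def F1_def by auto
  define b0 where "b0 = Min (bt ` F0)"
  define d0 where "d0 = Max (tp ` F0)"
  define b1 where "b1 = Min (bt ` F1)"
  define d1 where "d1 = Max (tp ` F1)"
  have b0le: "\<And>M. M \<in> F0 \<Longrightarrow> b0 \<le> bt M" unfolding b0_def using F0fin by auto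
  have d0ge: "\<And>M. M \<in> F0 \<Longrightarrow> tp M \<le> d0" unfolding d0_def using F0fin by auto
  have b1le: "\<And>M. M \<in> F1 \<Longrightarrow> b1 \<le> bt M" unfolding b1_def using F0fin by auto
  have d1ge: "\<And>M. M \<in> F1 \<Longrightarrow> tp M \<le> d1" unfolding d1_def using F0fin by auto
  obtain M1 where M1: "M1 \<in> F0" "bt M1 = b0" unfolding b0_def using F0fin F0ne
    by (metis (no_types, lifting) Min_in empty_is_image finite_imageI imageE)
  obtain M2 where M2: "M2 \<in> F0" "tp M2 = d0" unfolding d0_def using F0fin F0ne
    by (metis (no_types, lifting) Max_in empty_is_image finite_imageI imageE)
  obtain M3 where M3: "M3 \<in> F1" "bt M3 = b1" unfolding b1_def using F0fin F1ne
    by (metis (no_types, lifting) Min_in empty_is_image finite_imageI imageE)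
  obtain M4 where M4: "M4 \<in> F1" "tp M4 = d1" unfolding d1_def using F0fin F1ne
    by (metis (no_types, lifting) Max_in empty_is_image finite_imageI imageE)
  have sg: "(1::real,1::real) \<in> signs" "(1::real,-1::real) \<in> signs" "(-1::real,1::real) \<in> signs" "(-1::real,-1::real) \<in> signs"
    unfolding signs_def by auto
  have k1: "card (quadrants_in P (a0,b0)) = 1"
  proof (rule single_Q[OF g _ _ sg(1)])
    show "M1 \<in> F" using M1 F0_def by auto
    show "ext M1 (a0,b0) 1 1" using M1 vv[of M1] unfolding F0_def lf_def bt_def rg_def tp_def by (cases M1) auto
    fix N s' t' assume N: "N \<in> F" "(s',t') \<in> signs" "ext N (a0,b0) s' t'"
    have "lf N = a0" using N a0le[OF N(1)] unfolding lf_def by (cases N) auto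
    then have "N \<in> F0" using N unfolding F0_def by auto
    then show "s' = 1 \<and> t' = 1" using N b0le[of N] a0le[OF N(1)] unfolding lf_def bt_def
      by (cases N) (auto split: if_splits simp: mem_signs)
  qed
  have k2: "card (quadrants_in P (a0,d0)) = 1"
  proof (rule single_Q[OF g _ _ sg(2)])
    show "M2 \<in> F" using M2 F0_def by auto
    show "ext M2 (a0,d0) 1 (-1)" using M2 vv[of M2] unfolding F0_def lf_def bt_def rg_def tp_def by (cases M2) auto
    fix N s' t' assume N: "N \<in> F" "(s',t') \<in> signs" "ext N (a0,d0) s' t'"
    have "lf N = a0" using N a0le[OF N(1)] unfolding lf_def by (cases N) auto
    then have "N \<in> F0" using N unfolding F0_def by auto
    then show "s' = 1 \<and> t' = -1" using N d0ge[of N] a0le[OF N(1)] unfolding lf_def tp_def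
      by (cases N) (auto split: if_splits simp: mem_signs)
  qed
  have k3: "card (quadrants_in P (c0,b1)) = 1"
  proof (rule single_Q[OF g _ _ sg(3)])
    show "M3 \<in> F" using M3 F1_def by auto
    show "ext M3 (c0,b1) (-1) 1" using M3 vv[of M3] unfolding F1_def lf_def bt_def rg_def tp_def by (cases M3) auto
    fix N s' t' assume N: "N \<in> F" "(s',t') \<in> signs" "ext N (c0,b1) s' t'"
    have "rg N = c0" using N c0ge[OF N(1)] unfolding rg_def by (cases N) auto
    then have "N \<in> F1" using N unfolding F1_def by auto
    then show "s' = -1 \<and> t' = 1" using N b1le[of N] c0ge[OF N(1)] unfolding rg_def bt_def
      by (cases N) (auto split: if_splits simp: mem_signs)
  qed
  have k4: "card (quadrants_in P (c0,d1)) = 1"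
  proof (rule single_Q[OF g _ _ sg(4)])
    show "M4 \<in> F" using M4 F1_def by auto
    show "ext M4 (c0,d1) (-1) (-1)" using M4 vv[of M4] unfolding F1_def lf_def bt_def rg_def tp_def by (cases M4) auto
    fix N s' t' assume N: "N \<in> F" "(s',t') \<in> signs" "ext N (c0,d1) s' t'"
    have "rg N = c0" using N c0ge[OF N(1)] unfolding rg_def by (cases N) auto
    then have "N \<in> F1" using N unfolding F1_def by auto
    then show "s' = -1 \<and> t' = -1" using N d1ge[of N] c0ge[OF N(1)] unfolding rg_def tp_def
      by (cases N) (auto split: if_splits simp: mem_signs)
  qed
  have "a0 < c0" using M1 vv[of M1] c0ge[of M1] unfolding F0_def by auto
  moreover have "b0 < d0" using M1 vv[of M1] d0ge[of M1] unfolding F0_def by auto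
  moreover have "b1 < d1" using M3 vv[of M3] d1ge[of M3] unfolding F1_def by auto
  ultimately have "card {(a0,b0),(a0,d0),(c0,b1),(c0,d1)} = 4" by auto
  then show ?thesis using k1 k2 k3 k4 by (intro exI[of _ "{(a0,b0),(a0,d0),(c0,b1),(c0,d1)}"]) auto
qed

context
  fixes P :: "(real \<times> real) set" and F :: "rt set"
  assumes g: "good P F" and A2: "a2 P F" and A3: "a3 F"
    and np: "\<forall>p. quadrants_in P p \<noteq> {(1, 1), (-1, -1)} \<and> quadrants_in P p \<noteq> {(1, -1), (-1, 1)}"
begin

lemma finF: "finite F" using g by (auto simp: good_def)
lemma valF: "M \<in> F \<Longrightarrow> valid M" using g by (auto simp: good_def)
lemma disjF: "M \<in> F \<Longrightarrow> N \<in> F \<Longrightarrow> ovl M N \<Longrightarrow> M = N" using g by (auto simp: good_def disj_def)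

definition "I = F \<times> signs"
definition "fI = (\<lambda>(M,(s,t)). cor M s t)"
definition "fib p = {i \<in> I. fI i = p}"

lemma finI: "finite I" unfolding I_def using finF signs_fin by auto

lemma fibE: assumes "i \<in> fib p" obtains M s t where "i = (M,(s,t))" "M \<in> F" "s \<in> {-1,1}" "t \<in> {-1,1}" "cor M s t = p"
proof -
  from assms have i: "i \<in> I" "fI i = p" by (auto simp: fib_def)
  obtain M s t where "i = (M,(s,t))" by (metis prod.exhaust)
  then show thesis using that i by (auto simp: I_def fI_def mem_signs)
qed

lemma fib_inj: "inj_on snd (fib p)"
proof (rule inj_onI)
  fix i j assume i: "i \<in> fib p" and j: "j \<in> fib p" and e: "snd i = snd j"
  obtain M s t where Mi: "i = (M,(s,t))" "M \<in> F" "s \<in> {-1,1}" "t \<in> {-1,1}" "cor M s t = p" using fibE[OF i] by metis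
  obtain N s' t' where Nj: "j = (N,(s',t'))" "N \<in> F" "s' \<in> {-1,1}" "t' \<in> {-1,1}" "cor N s' t' = p" using fibE[OF j] by metis
  have "s = s'" "t = t'" using e Mi Nj by auto
  then have "ovl M N" using same_ovl[OF ext_cor[OF valF[OF Mi(2)] Mi(3,4)]] ext_cor[OF valF[OF Nj(2)] Nj(3,4)] Mi Nj
    by auto
  then show "i = j" using disjF Mi Nj \<open>s = s'\<close> \<open>t = t'\<close> by auto
qed

lemma fib_Q: "snd ` fib p \<subseteq> quadrants_in P p"
proof
  fix x assume "x \<in> snd ` fib p"
  then obtain i where i: "i \<in> fib p" "x = snd i" by blast
  obtain M s t where Mi: "i = (M,(s,t))" "M \<in> F" "s \<in> {-1,1}" "t \<in> {-1,1}" "cor M s t = p" using fibE[OF i(1)] by metis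
  show "x \<in> quadrants_in P p" using QE[OF g] i Mi ext_cor[OF valF[OF Mi(2)] Mi(3,4)] mem_signs by auto
qed

lemma fib_le: "card (fib p) \<le> card (quadrants_in P p)"
  using card_inj_on_le[OF fib_inj fib_Q Q_fin] .

lemma flipQ: "M \<in> F \<Longrightarrow> s \<in> {-1,1} \<Longrightarrow> t \<in> {-1,1} \<Longrightarrow> (s, -t) \<notin> quadrants_in P (cor M s t)"
  using flip_a2[OF A2 _ valF] unfolding quadrants_in_def by auto

lemma Q_le3: assumes "p \<in> fI ` I" shows "card (quadrants_in P p) \<le> 3"
proof -
  obtain i where "i \<in> fib p" using assms unfolding fib_def by auto
  then obtain M s t where Mi: "M \<in> F" "s \<in> {-1,1}" "t \<in> {-1,1}" "cor M s t = p" using fibE by metis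
  have "(s,-t) \<notin> quadrants_in P p" using flipQ[OF Mi(1-3)] Mi(4) by simp
  then have "quadrants_in P p \<subseteq> signs - {(s,-t)}" using Q_sub[of P p] by blast
  moreover have "(s,-t) \<in> signs" using Mi mem_signs by auto
  ultimately show ?thesis using card_mono[OF _ \<open>quadrants_in P p \<subseteq> _\<close>] card_signs_minus1 signs_fin by fastforce
qed

lemma fib_corner: assumes "p \<in> corners P" shows "card (fib p) \<le> 1"
proof (cases "card (quadrants_in P p) = 1")
  case True then show ?thesis using fib_le[of p] by auto
next
  case False
  then have c3: "card (quadrants_in P p) = 3" using assms unfolding corners_def by auto
  show ?thesis
  proof (rule ccontr)
    assume "\<not> card (fib p) \<le> 1"
    have finfib: "finite (fib p)" unfolding fib_def using finI by auto
    have "\<not> card (fib p) \<le> Suc 0" using \<open>\<not> card (fib p) \<le> 1\<close> by simp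
    then obtain i j where ij: "i \<in> fib p" "j \<in> fib p" "i \<noteq> j"
      unfolding card_le_Suc0_iff_eq[OF finfib] by blast
    obtain M s t where Mi: "i = (M,(s,t))" "M \<in> F" "s \<in> {-1,1}" "t \<in> {-1,1}" "cor M s t = p" using fibE[OF ij(1)] by metis
    obtain N s' t' where Nj: "j = (N,(s',t'))" "N \<in> F" "s' \<in> {-1,1}" "t' \<in> {-1,1}" "cor N s' t' = p" using fibE[OF ij(2)] by metis
    have "snd i \<noteq> snd j" using inj_onD[OF fib_inj _ ij(1,2)] ij(3) by blast
    then have "(s,t) \<noteq> (s',t')" using Mi(1) Nj(1) by simp
    then have d: "(s,-t) \<noteq> (s',-t')" by auto
    have "(s,-t) \<notin> quadrants_in P p" using flipQ[OF Mi(2-4)] Mi(5) by simp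
    moreover have "(s',-t') \<notin> quadrants_in P p" using flipQ[OF Nj(2-4)] Nj(5) by simp
    ultimately have "quadrants_in P p \<subseteq> signs - {(s,-t),(s',-t')}" using Q_sub[of P p] by blast
    moreover have "(s,-t) \<in> signs" "(s',-t') \<in> signs" using Mi Nj mem_signs by auto
    ultimately have "card (quadrants_in P p) \<le> 2"
      using card_mono[OF _ \<open>quadrants_in P p \<subseteq> _\<close>] card_signs_minus2[OF _ _ d] signs_fin by fastforce
    then show False using c3 by auto
  qed
qed

lemma fib_noncorner: assumes "p \<in> fI ` I" "p \<notin> corners P" shows "card (fib p) \<le> 2"
  using fib_le[of p] Q_le3[OF assms(1)] assms(2) unfolding corners_def by auto


lemma refl3:
  assumes "K \<in> F" "L \<in> F" "s \<in> {-1,1}" "t \<in> {-1,1}" "p = cor K s t" "p = cor L (-s) t"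
    "t * (snd (cor K s (-t)) - snd (cor L (-s) (-t))) < 0"
  shows "card (quadrants_in P (cor K s (-t))) = 3"
proof -
  let ?q = "cor K s (-t)"
  have m: "-t \<in> {-1,1}" "-s \<in> {-1,1}" using assms(3,4) by auto
  have L2: "ext L ?q (-s) t" "ext L ?q (-s) (-t)"
    using reflex_core[OF valF[OF assms(1)] valF[OF assms(2)] assms(3-7)] by auto
  have a: "(s,-t) \<in> quadrants_in P ?q"
    using QE[OF g] ext_cor[OF valF[OF assms(1)] assms(3) m(1)] assms(1,3) m mem_signs by auto
  have b: "(-s,t) \<in> quadrants_in P ?q" "(-s,-t) \<in> quadrants_in P ?q"
    using QE[OF g] L2 assms(2,4) m mem_signs by auto
  have c: "(s,t) \<notin> quadrants_in P ?q" using flipQ[OF assms(1,3) m(1)] by simp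
  have sub: "quadrants_in P ?q \<subseteq> signs - {(s,t)}" using c Q_sub[of P ?q] by blast
  have d: "s \<noteq> -s" "t \<noteq> -t" using assms(3,4) by auto
  show ?thesis
    by (rule card3[of "(s,-t)" "(-s,t)" "(-s,-t)", OF _ _ _ _ sub]) (use a b d assms(3,4) mem_signs in auto)
qed

lemma Tpoint:
  assumes "p \<in> fI ` I" "p \<notin> corners P"
  shows "\<exists>q. \<exists>K\<in>F. \<exists>s t. s \<in> {-1,1} \<and> t \<in> {-1,1} \<and> p = cor K s t \<and> q = cor K s (-t) \<and>
            card (quadrants_in P q) = 3"
proof -
  obtain i where "i \<in> fib p" using assms(1) unfolding fib_def by auto
  then obtain M s t where Mi: "M \<in> F" "s \<in> {-1,1}" "t \<in> {-1,1}" "cor M s t = p" using fibE by metis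
  let ?Q = "quadrants_in P p"
  have st: "(s,t) \<in> ?Q" using QE[OF g] ext_cor[OF valF[OF Mi(1)] Mi(2,3)] Mi mem_signs by auto
  have nst: "(s,-t) \<notin> ?Q" using flipQ[OF Mi(1-3)] Mi(4) by simp
  have c2: "card ?Q = 2"
  proof -
    have "card ?Q \<noteq> 0" using st Q_fin by auto
    then show ?thesis using Q_le3[OF assms(1)] assms(2) unfolding corners_def by auto
  qed
  have nd: "(-s,-t) \<notin> ?Q"
  proof
    assume h: "(-s,-t) \<in> ?Q"
    have sub: "{(s,t),(-s,-t)} \<subseteq> ?Q" using st h by auto
    moreover have "card {(s,t),(-s,-t)} = 2" using Mi(2) by auto
    ultimately have "?Q = {(s,t),(-s,-t)}" using c2 Q_fin by (metis card_subset_eq)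
    moreover have "{(s,t),(-s,-t)} = {(1,1),(-1,-1)} \<or> {(s,t),(-s,-t)} = {(1::real,-1::real),(-1,1)}"
      using Mi(2,3) by (elim insertE; simp; elim insertE; auto)
    ultimately have "?Q = {(1,1),(-1,-1)} \<or> ?Q = {(1,-1),(-1,1)}" by simp
    then show False using np by blast
  qed
  obtain e where e: "e \<in> ?Q" "e \<noteq> (s,t)"
  proof -
    have "\<not> ?Q \<subseteq> {(s,t)}"
    proof
      assume "?Q \<subseteq> {(s,t)}"
      then have "card ?Q \<le> card {(s,t)}" by (intro card_mono) auto
      then show False using c2 by simp
    qed
    then show thesis using that by blast
  qed
  have "e \<in> signs" using e Q_sub by blast
  then obtain e1 e2 where e12: "e = (e1,e2)" "e1 \<in> {-1,1}" "e2 \<in> {-1,1}" using mem_signs by (cases e) auto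
  have e_eq: "e = (-s,t)"
    using Mi(2,3) e12(2,3) e nst nd unfolding e12(1) by (elim insertE; simp; elim insertE; simp; elim insertE; simp; elim insertE; auto)
  then have "(-s,t) \<in> ?Q" using e by simp
  then obtain N where N: "N \<in> F" "ext N p (-s) t" using QE[OF g] by auto
  have n1: "\<not> ext N p (-s) (-t)" using nd QE[OF g] N(1) mem_signs Mi by auto
  have n2: "\<not> ext N p s t"
  proof
    assume "ext N p s t"
    then have "ovl M N" using same_ovl[OF ext_cor[OF valF[OF Mi(1)] Mi(2,3)]] Mi(2-4) by auto
    then have "M = N" using disjF Mi(1) N(1) by auto
    then show False using N(2) cor_not1[OF valF[OF Mi(1)] Mi(2,3)] Mi(4) by auto
  qed
  have pN: "p = cor N (-s) t" using core_cor[OF valF[OF N(1)] Mi(2,3) N(2) n2 n1] .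
  have ne: "snd (cor M s (-t)) \<noteq> snd (cor N (-s) (-t))"
    using a3_core[OF A3 Mi(1) N(1) Mi(2,3)] Mi(4) pN by auto
  show ?thesis
  proof (cases "t * (snd (cor M s (-t)) - snd (cor N (-s) (-t))) < 0")
    case True
    have "card (quadrants_in P (cor M s (-t))) = 3"
      by (rule refl3[OF Mi(1) N(1) Mi(2,3) Mi(4)[symmetric] pN True])
    then show ?thesis using Mi by blast
  next
    case False
    have tt: "t = 1 \<or> t = -1" using Mi(3) by auto
    then have ineq: "t * (snd (cor N (-s) (-t)) - snd (cor M (-(-s)) (-t))) < 0" using ne False by auto
    have ms: "-s \<in> {-1,1}" using Mi(2) by auto
    have "card (quadrants_in P (cor N (-s) (-t))) = 3"
      by (rule refl3[OF N(1) Mi(1) ms Mi(3) pN]) (use Mi(4) ineq in auto)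
    then show ?thesis using N pN ms Mi(3) by blast
  qed
qed


lemma Tcard:
  assumes fc: "finite (corners P)"
  shows "card (fI ` I - corners P) + 4 \<le> card (corners P)"
proof -
  define T where "T = fI ` I - corners P"
  define R where "R p = (\<lambda>q. \<exists>K\<in>F. \<exists>s t. s \<in> {-1,1} \<and> t \<in> {-1,1} \<and> p = cor K s t \<and> q = cor K s (-t) \<and>
            card (quadrants_in P q) = 3)" for p q
  define gq where "gq p = (SOME q. R p q)" for p
  have gR: "R p (gq p)" if "p \<in> T" for p
  proof -
    have "\<exists>q. R p q" using Tpoint[of p] that unfolding T_def R_def by simp
    then show ?thesis unfolding gq_def by (rule someI_ex)
  qed
  have inj: "inj_on gq T"
  proof (rule inj_onI)
    fix p1 p2 assume p1: "p1 \<in> T" and p2: "p2 \<in> T" and e: "gq p1 = gq p2"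
    obtain K1 s1 t1 where k1: "K1 \<in> F" "s1 \<in> {-1,1}" "t1 \<in> {-1,1}" "p1 = cor K1 s1 t1" "gq p1 = cor K1 s1 (-t1)"
      "card (quadrants_in P (gq p1)) = 3" using gR[OF p1] unfolding R_def by blast
    obtain K2 s2 t2 where k2: "K2 \<in> F" "s2 \<in> {-1,1}" "t2 \<in> {-1,1}" "p2 = cor K2 s2 t2" "gq p2 = cor K2 s2 (-t2)"
      using gR[OF p2] unfolding R_def by blast
    have cq: "gq p1 \<in> corners P" using k1(6) unfolding corners_def by auto
    have sg: "(s1,-t1) \<in> signs" "(s2,-t2) \<in> signs" using k1(2,3) k2(2,3) mem_signs by auto
    have mm: "(K1,(s1,-t1)) \<in> fib (gq p1)" "(K2,(s2,-t2)) \<in> fib (gq p1)"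
      using k1(1,5) k2(1,5) e sg unfolding fib_def I_def fI_def by auto
    have ff: "finite (fib (gq p1))" unfolding fib_def using finI by auto
    have "card (fib (gq p1)) \<le> Suc 0" using fib_corner[OF cq] by simp
    then have all: "\<forall>x\<in>fib (gq p1). \<forall>y\<in>fib (gq p1). x = y" using card_le_Suc0_iff_eq[OF ff] by simp
    have "(K1,(s1,-t1)) = (K2,(s2,-t2))" using bspec[OF bspec[OF all mm(1)] mm(2)] .
    then show "p1 = p2" using k1(4) k2(4) by simp
  qed
  have img3: "card (quadrants_in P (gq p)) = 3" if "p \<in> T" for p
  proof -
    from gR[OF that] obtain K s t where "card (quadrants_in P (gq p)) = 3" unfolding R_def by blast
    then show ?thesis .
  qed
  have img: "gq ` T \<subseteq> {q \<in> corners P. card (quadrants_in P q) = 3}"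
    using img3 unfolding corners_def by auto
  obtain C where C: "C \<subseteq> {q. card (quadrants_in P q) = 1}" "card C = 4" using convex4[OF g] by blast
  have Cc: "C \<subseteq> corners P" using C(1) unfolding corners_def by auto
  have dj: "gq ` T \<inter> C = {}"
  proof (rule ccontr)
    assume "gq ` T \<inter> C \<noteq> {}"
    then obtain q where "q \<in> gq ` T" "q \<in> C" by blast
    then have "card (quadrants_in P q) = 3" "card (quadrants_in P q) = 1" using img C(1) by blast+
    then show False by simp
  qed
  have finC: "finite C"
  proof (rule ccontr)
    assume "infinite C" then have "card C = 0" by simp
    then show False using C(2) by simp
  qed
  have finT: "finite T" unfolding T_def using finI by auto
  have "card (gq ` T \<union> C) = card (gq ` T) + card C" using card_Un_disjoint[OF _ finC dj] finT by blast
  then have "card (gq ` T \<union> C) = card T + 4" using card_image[OF inj] C(2) by simp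
  moreover have "card (gq ` T \<union> C) \<le> card (corners P)" using img Cc fc by (intro card_mono) auto
  ultimately show ?thesis unfolding T_def by simp
qed

lemma count:
  assumes fc: "finite (corners P)"
  shows "4 * card F + 8 \<le> 3 * card (corners P)"
proof -
  have cI: "card I = 4 * card F" unfolding I_def using signs_card finF by (simp add: card_cartesian_product)
  have "card I = (\<Sum>i\<in>I. 1)" by simp
  also have "\<dots> = (\<Sum>p\<in>fI ` I. (\<Sum>i\<in>{x. x \<in> I \<and> fI x = p}. 1))" by (rule sum.image_gen[OF finI])
  also have "\<dots> = (\<Sum>p\<in>fI ` I. card (fib p))" unfolding fib_def by simp
  finally have cs: "card I = (\<Sum>p\<in>fI ` I. card (fib p))" .
  define T where "T = fI ` I - corners P"
  have fimg: "finite (fI ` I)" using finI by auto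
  have split: "(\<Sum>p\<in>fI ` I. card (fib p)) = (\<Sum>p\<in>fI ` I \<inter> corners P. card (fib p)) + (\<Sum>p\<in>T. card (fib p))"
    unfolding T_def using fimg by (metis sum.Int_Diff)
  have s1: "(\<Sum>p\<in>fI ` I \<inter> corners P. card (fib p)) \<le> (\<Sum>p\<in>fI ` I \<inter> corners P. 1)"
    by (rule sum_mono) (use fib_corner in auto)
  have s1': "card (fI ` I \<inter> corners P) \<le> card (corners P)" using fc by (intro card_mono) auto
  have s2: "(\<Sum>p\<in>T. card (fib p)) \<le> (\<Sum>p\<in>T. 2)"
    by (rule sum_mono) (use fib_noncorner in \<open>auto simp: T_def\<close>)
  have cT: "card T + 4 \<le> card (corners P)" using Tcard[OF fc] unfolding T_def .
  have "(\<Sum>p\<in>fI ` I \<inter> corners P. (1::nat)) = card (fI ` I \<inter> corners P)" by simp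
  moreover have "(\<Sum>p\<in>T. (2::nat)) = 2 * card T" by simp
  ultimately show ?thesis using cI cs split s1 s1' s2 cT by linarith
qed


end

lemma ovl_sym: "ovl M N \<Longrightarrow> ovl N M"
  by (cases M; cases N) auto

lemma merge_good:
  assumes g: "good P F" and M1: "M1 \<in> F" and M2: "M2 \<in> F" and ne: "M1 \<noteq> M2"
    and vn: "valid Mn" and ru: "rect Mn = rect M1 \<union> rect M2"
    and ov: "\<And>N. valid N \<Longrightarrow> ovl N Mn \<Longrightarrow> ovl N M1 \<or> ovl N M2" and o1: "ovl Mn M1"
  shows "good P (insert Mn (F - {M1,M2})) \<and> card (insert Mn (F - {M1,M2})) < card F"
proof -
  have fin: "finite F" and val: "\<forall>M\<in>F. valid M" and PU: "P = \<Union>(rect ` F)" and dj: "disj F"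
    using g by (auto simp: good_def)
  let ?F = "insert Mn (F - {M1,M2})"
  have "\<Union>(rect ` ?F) = rect Mn \<union> \<Union>(rect ` (F - {M1,M2}))" by simp
  also have "\<dots> = \<Union>(rect ` F)" using ru M1 M2 by blast
  finally have u: "P = \<Union>(rect ` ?F)" using PU by simp
  have dj': "disj ?F"
    unfolding disj_def
  proof (intro ballI impI)
    fix A B assume A: "A \<in> ?F" and B: "B \<in> ?F" and o: "ovl A B"
    show "A = B"
    proof (cases "A = Mn")
      case True
      show ?thesis
      proof (rule ccontr)
        assume "A \<noteq> B"
        then have "B \<in> F - {M1,M2}" using B True by auto
        moreover have "ovl B Mn" using o True ovl_sym by blast
        ultimately show False using ov val dj M1 M2 unfolding disj_def by blast
      qed
    next
      case False
      then have A': "A \<in> F - {M1,M2}" using A by auto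
      show ?thesis
      proof (cases "B = Mn")
        case True
        then have "ovl A M1 \<or> ovl A M2" using ov o val A' by blast
        then show ?thesis using A' dj M1 M2 unfolding disj_def by blast
      next
        case False
        then show ?thesis using A' B o dj unfolding disj_def by auto
      qed
    qed
  qed
  have nin: "Mn \<notin> F - {M1,M2}"
  proof
    assume "Mn \<in> F - {M1,M2}"
    then have "Mn = M1" using o1 dj M1 unfolding disj_def by blast
    then show False using \<open>Mn \<in> F - {M1,M2}\<close> by blast
  qed
  have "card ?F = card (F - {M1,M2}) + 1" using nin fin by simp
  moreover have "card (F - {M1,M2}) = card F - 2" using M1 M2 ne fin
    by (simp add: card_Diff_subset)
  moreover have "card F \<ge> 2" using M1 M2 ne fin
    by (metis card_2_iff card_mono empty_subsetI insert_subset)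
  ultimately have "card ?F < card F" by linarith
  moreover have "good P ?F" using fin val vn u dj' unfolding good_def by auto
  ultimately show ?thesis by blast
qed

lemma rect_vsplit: "b \<le> d \<Longrightarrow> d \<le> e \<Longrightarrow> rect (a,b,c,e) = rect (a,b,c,d) \<union> rect (a,d,c,e)"
  by (rule set_eqI) (auto simp: mem_rect split: prod.splits)

lemma rect_hsplit: "a \<le> c \<Longrightarrow> c \<le> e \<Longrightarrow> rect (a,b,e,d) = rect (a,b,c,d) \<union> rect (c,b,e,d)"
  by (rule set_eqI) (auto simp: mem_rect split: prod.splits)

lemma vmerge_good:
  assumes "good P F" "(a,b,c,d) \<in> F" "(a,d,c,e) \<in> F"
  shows "good P (insert (a,b,c,e) (F - {(a,b,c,d),(a,d,c,e)})) \<and>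
         card (insert (a,b,c,e) (F - {(a,b,c,d),(a,d,c,e)})) < card F"
proof -
  have v: "a < c" "b < d" "d < e" using assms unfolding good_def by auto
  show ?thesis
  proof (rule merge_good[OF assms])
    show "(a,b,c,d) \<noteq> (a,d,c,e)" using v by auto
    show "valid (a,b,c,e)" using v by auto
    show "rect (a,b,c,e) = rect (a,b,c,d) \<union> rect (a,d,c,e)" using v by (intro rect_vsplit) auto
    show "valid N \<Longrightarrow> ovl N (a,b,c,e) \<Longrightarrow> ovl N (a,b,c,d) \<or> ovl N (a,d,c,e)" for N by (cases N) auto
    show "ovl (a,b,c,e) (a,b,c,d)" using v by auto
  qed
qed

lemma hmerge_good:
  assumes "good P F" "(a,b,c,d) \<in> F" "(c,b,e,d) \<in> F"
  shows "good P (insert (a,b,e,d) (F - {(a,b,c,d),(c,b,e,d)})) \<and>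
         card (insert (a,b,e,d) (F - {(a,b,c,d),(c,b,e,d)})) < card F"
proof -
  have v: "a < c" "b < d" "c < e" using assms unfolding good_def by auto
  show ?thesis
  proof (rule merge_good[OF assms])
    show "(a,b,c,d) \<noteq> (c,b,e,d)" using v by auto
    show "valid (a,b,e,d)" using v by auto
    show "rect (a,b,e,d) = rect (a,b,c,d) \<union> rect (c,b,e,d)" using v by (intro rect_hsplit) auto
    show "valid N \<Longrightarrow> ovl N (a,b,e,d) \<Longrightarrow> ovl N (a,b,c,d) \<or> ovl N (c,b,e,d)" for N by (cases N) auto
    show "ovl (a,b,e,d) (a,b,c,d)" using v by auto
  qed
qed

lemma intok_merge:
  assumes "intok F" "(a,b,c,d) \<in> F" "(a',b',c',d') \<in> F"
  shows "intok (insert (a,b',c',d) (F - X))" "intok (insert (a,b,c',d') (F - X))"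
    "intok (insert (a,b,c',d) (F - X))"
  using assms unfolding intok_def by blast+

lemma a2_hmerge:
  assumes "a2 P F" "(a,b,c,d) \<in> F" "(c,b,e,d) \<in> F"
  shows "a2 P (insert (a,b,e,d) (F - {(a,b,c,d),(c,b,e,d)}))"
proof -
  have H: "\<And>a b c d u. (a,b,c,d) \<in> F \<Longrightarrow>
     ((a \<le> u \<and> u < c) \<longrightarrow> \<not> quadrant_in P (u,d) 1 1 \<and> \<not> quadrant_in P (u,b) 1 (-1)) \<and>
     ((a < u \<and> u \<le> c) \<longrightarrow> \<not> quadrant_in P (u,d) (-1) 1 \<and> \<not> quadrant_in P (u,b) (-1) (-1))"
    using assms(1) unfolding a2_def by blast
  show ?thesis unfolding a2_def
  proof (intro allI impI)
    fix a' b' c' d' u assume m: "(a',b',c',d') \<in> insert (a,b,e,d) (F - {(a,b,c,d),(c,b,e,d)})"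
    show "((a' \<le> u \<and> u < c') \<longrightarrow> \<not> quadrant_in P (u,d') 1 1 \<and> \<not> quadrant_in P (u,b') 1 (-1)) \<and>
     ((a' < u \<and> u \<le> c') \<longrightarrow> \<not> quadrant_in P (u,d') (-1) 1 \<and> \<not> quadrant_in P (u,b') (-1) (-1))"
    proof (cases "(a',b',c',d') = (a,b,e,d)")
      case True
      then have eq: "a' = a" "b' = b" "c' = e" "d' = d" by auto
      show ?thesis unfolding eq
      proof (cases "u < c")
        case True
        then show "((a \<le> u \<and> u < e) \<longrightarrow> \<not> quadrant_in P (u,d) 1 1 \<and> \<not> quadrant_in P (u,b) 1 (-1)) \<and>
         ((a < u \<and> u \<le> e) \<longrightarrow> \<not> quadrant_in P (u,d) (-1) 1 \<and> \<not> quadrant_in P (u,b) (-1) (-1))"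
          using H[OF assms(2), of u] by auto
      next
        case False
        then have F1: "c \<le> u" by simp
        show "((a \<le> u \<and> u < e) \<longrightarrow> \<not> quadrant_in P (u,d) 1 1 \<and> \<not> quadrant_in P (u,b) 1 (-1)) \<and>
         ((a < u \<and> u \<le> e) \<longrightarrow> \<not> quadrant_in P (u,d) (-1) 1 \<and> \<not> quadrant_in P (u,b) (-1) (-1))"
        proof (cases "u = c")
          case True
          then show ?thesis using H[OF assms(2), of u] H[OF assms(3), of u] by auto
        next
          case False
          then show ?thesis using H[OF assms(3), of u] F1 by auto
        qed
      qed
    next
      case False
      then have "(a',b',c',d') \<in> F" using m by auto
      then show ?thesis using H by blast
    qed
  qed
qed

definition consec :: "real set \<Rightarrow> real \<Rightarrow> real \<Rightarrow> bool" where
  "consec X a c \<longleftrightarrow> a \<in> X \<and> c \<in> X \<and> a < c \<and> (\<forall>z\<in>X. \<not> (a < z \<and> z < c))"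

lemma consec_ovl:
  assumes "consec X a c" "consec X a' c'" "a < c'" "a' < c"
  shows "a = a' \<and> c = c'"
proof -
  have "\<not> a < a'" using assms unfolding consec_def by auto
  moreover have "\<not> a' < a" using assms unfolding consec_def by auto
  ultimately have e: "a = a'" by auto
  have "\<not> c < c'" using assms e unfolding consec_def by auto
  moreover have "\<not> c' < c" using assms e unfolding consec_def by auto
  ultimately show ?thesis using e by auto
qed

lemma consec_find:
  assumes fin: "finite X" and "a \<in> X" "c \<in> X" "a < c" "a \<le> u" "u \<le> c"
  shows "\<exists>x1 x2. consec X x1 x2 \<and> a \<le> x1 \<and> x1 \<le> u \<and> u \<le> x2 \<and> x2 \<le> c"
proof (cases "u < c")
  case True
  define A where "A = {z \<in> X. z \<le> u}"
  define B where "B = {z \<in> X. u < z}"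
  have fA: "finite A" "A \<noteq> {}" "a \<in> A" using fin assms True unfolding A_def by auto
  have fB: "finite B" "B \<noteq> {}" "c \<in> B" using fin assms True unfolding B_def by auto
  define x1 where "x1 = Max A"
  define x2 where "x2 = Min B"
  have x1: "x1 \<in> A" "\<forall>z\<in>A. z \<le> x1" using fA unfolding x1_def by auto
  have x2: "x2 \<in> B" "\<forall>z\<in>B. x2 \<le> z" using fB unfolding x2_def by auto
  have "consec X x1 x2"
    unfolding consec_def
  proof (intro conjI ballI)
    show "x1 \<in> X" "x2 \<in> X" using x1 x2 unfolding A_def B_def by auto
    show "x1 < x2" using x1 x2 unfolding A_def B_def by auto
    fix z assume "z \<in> X"
    show "\<not> (x1 < z \<and> z < x2)"
    proof
      assume h: "x1 < z \<and> z < x2"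
      show False
      proof (cases "z \<le> u")
        case True then have "z \<in> A" using \<open>z \<in> X\<close> unfolding A_def by auto
        then show False using x1 h by auto
      next
        case False then have "z \<in> B" using \<open>z \<in> X\<close> unfolding B_def by auto
        then show False using x2 h by auto
      qed
    qed
  qed
  moreover have "a \<le> x1" "x1 \<le> u" "u \<le> x2" "x2 \<le> c" using x1 x2 fA fB unfolding A_def B_def by auto
  ultimately show ?thesis by blast
next
  case False
  then have uc: "u = c" using assms by auto
  define A where "A = {z \<in> X. z < c}"
  have fA: "finite A" "A \<noteq> {}" "a \<in> A" using fin assms unfolding A_def by auto
  define x1 where "x1 = Max A"
  have x1: "x1 \<in> A" "\<forall>z\<in>A. z \<le> x1" using fA unfolding x1_def by auto
  have "consec X x1 c"
    unfolding consec_def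
  proof (intro conjI ballI)
    show "x1 \<in> X" "c \<in> X" "x1 < c" using x1 assms unfolding A_def by auto
    fix z assume "z \<in> X"
    then show "\<not> (x1 < z \<and> z < c)" using x1 unfolding A_def by auto
  qed
  moreover have "a \<le> x1" "x1 \<le> u" using x1 fA uc unfolding A_def by auto
  ultimately show ?thesis using uc by blast
qed

lemma grid:
  assumes fin: "finite R0" and ne: "R0 \<noteq> {}" and val: "\<forall>M\<in>R0. valid M" and PU: "P = \<Union>(rect ` R0)"
  defines "X \<equiv> (\<lambda>(a,b,c,d). a) ` R0 \<union> (\<lambda>(a,b,c,d). c) ` R0"
    and "Y \<equiv> (\<lambda>(a,b,c,d). b) ` R0 \<union> (\<lambda>(a,b,c,d). d) ` R0"
  defines "G \<equiv> {(a,b,c,d). consec X a c \<and> consec Y b d \<and> (\<exists>R\<in>R0. rect (a,b,c,d) \<subseteq> rect R)}"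
  shows "good P G \<and> (\<forall>a b c d. (a,b,c,d) \<in> G \<longrightarrow> consec X a c) \<and> (intok R0 \<longrightarrow> intok G)"
proof -
  have fX: "finite X" "finite Y" using fin unfolding X_def Y_def by auto
  have Gsub: "G \<subseteq> X \<times> Y \<times> X \<times> Y" unfolding G_def consec_def by auto
  have fG: "finite G" using finite_subset[OF Gsub] fX by auto
  have vG: "\<forall>M\<in>G. valid M" unfolding G_def consec_def by auto
  have U: "P = \<Union>(rect ` G)"
  proof
    show "\<Union>(rect ` G) \<subseteq> P" unfolding PU G_def by blast
    show "P \<subseteq> \<Union>(rect ` G)"
    proof
      fix z assume "z \<in> P"
      then obtain R where R: "R \<in> R0" "z \<in> rect R" unfolding PU by blast
      obtain a b c d where Rd: "R = (a,b,c,d)" by (cases R)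
      obtain u v where z: "z = (u,v)" by (cases z)
      have inX: "a \<in> X" "c \<in> X" "b \<in> Y" "d \<in> Y" unfolding X_def Y_def using R(1) Rd by force+
      have r: "a \<le> u" "u \<le> c" "b \<le> v" "v \<le> d" "a < c" "b < d" using R Rd z val by auto
      obtain x1 x2 where x: "consec X x1 x2" "a \<le> x1" "x1 \<le> u" "u \<le> x2" "x2 \<le> c"
        using consec_find[OF fX(1) inX(1,2) r(5,1,2)] by blast
      obtain y1 y2 where y: "consec Y y1 y2" "b \<le> y1" "y1 \<le> v" "v \<le> y2" "y2 \<le> d"
        using consec_find[OF fX(2) inX(3,4) r(6,3,4)] by blast
      have "rect (x1,y1,x2,y2) \<subseteq> rect R" using x y Rd by auto
      then have "(x1,y1,x2,y2) \<in> G" unfolding G_def using x y R(1) by auto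
      moreover have "z \<in> rect (x1,y1,x2,y2)" using x y z by auto
      ultimately show "z \<in> \<Union>(rect ` G)" by blast
    qed
  qed
  have Gne: "G \<noteq> {}"
  proof
    assume "G = {}"
    then have "P = {}" using U by simp
    moreover obtain R where "R \<in> R0" using ne by auto
    moreover obtain a b c d where "R = (a,b,c,d)" by (cases R)
    ultimately have "(a,b) \<in> P" using val PU by fastforce
    then show False using \<open>P = {}\<close> by simp
  qed
  have dG: "disj G"
    unfolding disj_def
  proof (intro ballI impI)
    fix M N assume M: "M \<in> G" and N: "N \<in> G" and o: "ovl M N"
    obtain a b c d where Md: "M = (a,b,c,d)" by (cases M)
    obtain a' b' c' d' where Nd: "N = (a',b',c',d')" by (cases N)
    have "consec X a c" "consec Y b d" "consec X a' c'" "consec Y b' d'"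
      using M N Md Nd unfolding G_def by auto
    then show "M = N" using consec_ovl o Md Nd by auto
  qed
  have col: "\<forall>a b c d. (a,b,c,d) \<in> G \<longrightarrow> consec X a c" unfolding G_def by auto
  have io: "intok R0 \<longrightarrow> intok G"
  proof
    assume "intok R0"
    then have "X \<subseteq> \<int>" "Y \<subseteq> \<int>" unfolding intok_def X_def Y_def by auto
    then show "intok G" using Gsub unfolding intok_def by auto
  qed
  show ?thesis using fG Gne vG U dG col io unfolding good_def by auto
qed

lemma colmin_a2:
  assumes g: "good P F" and col: "\<forall>a b c d. (a,b,c,d) \<in> F \<longrightarrow> consec X a c"
    and io: "pp \<longrightarrow> intok F"
    and mn: "\<And>F'. good P F' \<and> (\<forall>a b c d. (a,b,c,d) \<in> F' \<longrightarrow> consec X a c) \<and> (pp \<longrightarrow> intok F') \<Longrightarrow> card F \<le> card F'"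
  shows "a2 P F"
proof -
  have fin: "finite F" and val: "\<forall>M\<in>F. valid M" and PU: "P = \<Union>(rect ` F)" and dj: "disj F"
    using g by (auto simp: good_def)
  have vmerge_no: False if "(a,b,c,d) \<in> F" "(a,d,c,e) \<in> F" for a b c d e
  proof -
    let ?F = "insert (a,b,c,e) (F - {(a,b,c,d),(a,d,c,e)})"
    have m: "good P ?F" "card ?F < card F" using vmerge_good[OF g that] by auto
    have "\<forall>a' b' c' d'. (a',b',c',d') \<in> ?F \<longrightarrow> consec X a' c'" using col that by auto
    moreover have "intok F \<Longrightarrow> intok ?F" by (rule intok_merge(2)[OF _ that])
    then have "pp \<longrightarrow> intok ?F" using io by blast
    ultimately have "card F \<le> card ?F" using mn m by blast
    then show False using m by simp
  qed
  have colN: "a' = a \<and> c' = c" if "(a,b,c,d) \<in> F" "(a',b',c',d') \<in> F" "a < c'" "a' < c" for a b c d a' b' c' d'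
  proof -
    have "consec X a c" "consec X a' c'" using col that(1,2) by blast+
    then show ?thesis using consec_ovl[of X a c a' c'] that(3,4) by auto
  qed
  show ?thesis unfolding a2_def
  proof (intro allI impI conjI)
    fix a b c d u assume M: "(a,b,c,d) \<in> F"
    have v: "a < c" "b < d" using val M by auto
    have qF: "quadrant_in P p s t \<longleftrightarrow> (\<exists>N\<in>F. ext N p s t)" if "s \<in> {-1,1}" "t \<in> {-1,1}" for p s t
      using quadrant_F[OF fin PU that] .
    {
      assume u: "a \<le> u \<and> u < c"
      show "\<not> quadrant_in P (u,d) 1 1"
      proof
        assume "quadrant_in P (u,d) 1 1"
        then obtain N where N: "N \<in> F" "ext N (u,d) 1 1" using qF by auto
        obtain a' b' c' d' where Nd: "N = (a',b',c',d')" by (cases N)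
        have e: "a' = a" "c' = c" using colN[OF M N(1)[unfolded Nd]] N(2) Nd u by auto
        have "\<not> b' < d"
        proof
          assume "b' < d"
          then have "ovl (a,b,c,d) N" using N(2) Nd e v by auto
          then have "(a,b,c,d) = N" using dj M N(1) unfolding disj_def by blast
          then show False using N(2) Nd by auto
        qed
        then have "N = (a,d,c,d')" using N(2) Nd e by auto
        then show False using vmerge_no[OF M] N(1) by blast
      qed
      show "\<not> quadrant_in P (u,b) 1 (-1)"
      proof
        assume "quadrant_in P (u,b) 1 (-1)"
        then obtain N where N: "N \<in> F" "ext N (u,b) 1 (-1)" using qF by auto
        obtain a' b' c' d' where Nd: "N = (a',b',c',d')" by (cases N)
        have e: "a' = a" "c' = c" using colN[OF M N(1)[unfolded Nd]] N(2) Nd u by auto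
        have "\<not> b < d'"
        proof
          assume "b < d'"
          then have "ovl (a,b,c,d) N" using N(2) Nd e v by auto
          then have "(a,b,c,d) = N" using dj M N(1) unfolding disj_def by blast
          then show False using N(2) Nd by auto
        qed
        then have "N = (a,b',c,b)" using N(2) Nd e by auto
        then show False using vmerge_no[OF _ M] N(1) by blast
      qed
    }
    {
      assume u: "a < u \<and> u \<le> c"
      show "\<not> quadrant_in P (u,d) (-1) 1"
      proof
        assume "quadrant_in P (u,d) (-1) 1"
        then obtain N where N: "N \<in> F" "ext N (u,d) (-1) 1" using qF by auto
        obtain a' b' c' d' where Nd: "N = (a',b',c',d')" by (cases N)
        have e: "a' = a" "c' = c" using colN[OF M N(1)[unfolded Nd]] N(2) Nd u by auto
        have "\<not> b' < d"
        proof
          assume "b' < d"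
          then have "ovl (a,b,c,d) N" using N(2) Nd e v by auto
          then have "(a,b,c,d) = N" using dj M N(1) unfolding disj_def by blast
          then show False using N(2) Nd by auto
        qed
        then have "N = (a,d,c,d')" using N(2) Nd e by auto
        then show False using vmerge_no[OF M] N(1) by blast
      qed
      show "\<not> quadrant_in P (u,b) (-1) (-1)"
      proof
        assume "quadrant_in P (u,b) (-1) (-1)"
        then obtain N where N: "N \<in> F" "ext N (u,b) (-1) (-1)" using qF by auto
        obtain a' b' c' d' where Nd: "N = (a',b',c',d')" by (cases N)
        have e: "a' = a" "c' = c" using colN[OF M N(1)[unfolded Nd]] N(2) Nd u by auto
        have "\<not> b < d'"
        proof
          assume "b < d'"
          then have "ovl (a,b,c,d) N" using N(2) Nd e v by auto
          then have "(a,b,c,d) = N" using dj M N(1) unfolding disj_def by blast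
          then show False using N(2) Nd by auto
        qed
        then have "N = (a,b',c,b)" using N(2) Nd e by auto
        then show False using vmerge_no[OF _ M] N(1) by blast
      qed
    }
  qed
qed

lemma base:
  assumes "orthogonal_polygon P"
  shows "\<exists>R0. finite R0 \<and> R0 \<noteq> {} \<and> (\<forall>M\<in>R0. valid M) \<and> P = \<Union>(rect ` R0) \<and> (is_polyomino P \<longrightarrow> intok R0)"
proof -
  obtain \<R> where R: "finite \<R>" "\<R> \<noteq> {}" "\<forall>R\<in>\<R>. is_rectangle R" "P = \<Union>\<R>"
    using assms unfolding orthogonal_polygon_def by blast
  have "\<forall>R\<in>\<R>. \<exists>M. valid M \<and> R = rect M"
  proof
    fix R assume "R \<in> \<R>"
    then have "is_rectangle R" using R(3) by blast
    then obtain a b c d where "a < c" "b < d" "R = cbox (a,b) (c,d)" unfolding is_rectangle_def by auto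
    then show "\<exists>M. valid M \<and> R = rect M" by (intro exI[of _ "(a,b,c,d)"]) auto
  qed
  then obtain tup where tup: "\<forall>R\<in>\<R>. valid (tup R) \<and> R = rect (tup R)" by metis
  define R1 where "R1 = tup ` \<R>"
  have "rect ` R1 = (\<lambda>R. rect (tup R)) ` \<R>" unfolding R1_def image_image ..
  also have "\<dots> = (\<lambda>R. R) ` \<R>" by (rule image_cong) (use tup in auto)
  finally have U1: "P = \<Union>(rect ` R1)" unfolding R(4) by simp
  have v1: "\<forall>M\<in>R1. valid M" using tup unfolding R1_def by auto
  have Pne: "P \<noteq> {}"
  proof -
    obtain R where "R \<in> \<R>" using R(2) by auto
    moreover obtain a b c d where "tup R = (a,b,c,d)" by (cases "tup R")
    ultimately have "(a,b) \<in> P" using tup R(4) by fastforce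
    then show ?thesis by auto
  qed
  show ?thesis
  proof (cases "is_polyomino P")
    case False
    have "finite R1" "R1 \<noteq> {}" using R(1,2) unfolding R1_def by auto
    then show ?thesis using U1 v1 False by blast
  next
    case True
    then obtain C :: "(int \<times> int) set" where C: "finite C" "P = (\<Union>(i, j)\<in>C. cell i j)"
      unfolding is_polyomino_def by blast
    define R0 where "R0 = (\<lambda>(i,j). (real_of_int i, real_of_int j, real_of_int i + 1, real_of_int j + 1)) ` C"
    have "rect ((\<lambda>(i,j). (real_of_int i, real_of_int j, real_of_int i + 1, real_of_int j + 1)) ij) = (\<lambda>(i,j). cell i j) ij" for ij
      by (cases ij) (simp add: cell_def)
    then have U0: "P = \<Union>(rect ` R0)" unfolding R0_def C(2) image_image by simp
    have "C \<noteq> {}" using Pne C(2) by auto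
    then have "R0 \<noteq> {}" unfolding R0_def by auto
    moreover have "finite R0" using C(1) unfolding R0_def by auto
    moreover have "\<forall>M\<in>R0. valid M" unfolding R0_def by auto
    moreover have "intok R0" unfolding R0_def intok_def by auto
    ultimately show ?thesis using U0 by blast
  qed
qed

lemma int_cover:
  fixes x :: real
  assumes "of_int i0 \<le> x" "x \<le> of_int i1" "i0 < i1"
  shows "\<exists>i. i0 \<le> i \<and> i < i1 \<and> of_int i \<le> x \<and> x \<le> of_int i + 1"
proof (cases "x < of_int i1")
  case True
  have "i0 \<le> \<lfloor>x\<rfloor>" using assms(1) by (simp add: le_floor_iff)
  moreover have "\<lfloor>x\<rfloor> < i1" using True by (simp add: floor_less_iff)
  moreover have "of_int \<lfloor>x\<rfloor> \<le> x" by simp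
  moreover have "x \<le> of_int \<lfloor>x\<rfloor> + 1" by linarith
  ultimately show ?thesis by blast
next
  case False
  then have "x = of_int i1" using assms by auto
  then show ?thesis using assms(3) by (intro exI[of _ "i1 - 1"]) auto
qed

lemma rect_polyomino:
  assumes "a \<in> \<int>" "b \<in> \<int>" "c \<in> \<int>" "d \<in> \<int>" "a < c" "b < d"
  shows "is_polyomino (rect (a,b,c,d))"
proof -
  obtain i0 where i0: "a = of_int i0" using assms(1) Ints_cases by blast
  obtain j0 where j0: "b = of_int j0" using assms(2) Ints_cases by blast
  obtain i1 where i1: "c = of_int i1" using assms(3) Ints_cases by blast
  obtain j1 where j1: "d = of_int j1" using assms(4) Ints_cases by blast
  have lt: "i0 < i1" "j0 < j1" using assms(5,6) i0 i1 j0 j1 by auto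
  define C where "C = {i0..<i1} \<times> {j0..<j1}"
  have "rect (a,b,c,d) = (\<Union>(i, j)\<in>C. cell i j)"
  proof
    show "(\<Union>(i, j)\<in>C. cell i j) \<subseteq> rect (a,b,c,d)"
    proof
      fix z assume "z \<in> (\<Union>(i, j)\<in>C. cell i j)"
      then obtain i j where ij: "i0 \<le> i" "i < i1" "j0 \<le> j" "j < j1" "z \<in> cell i j" unfolding C_def by auto
      obtain x y where z: "z = (x,y)" by (cases z)
      have "of_int i0 \<le> (of_int i :: real)" "of_int i + 1 \<le> (of_int i1 :: real)"
        "of_int j0 \<le> (of_int j :: real)" "of_int j + 1 \<le> (of_int j1 :: real)" using ij by linarith+
      then show "z \<in> rect (a,b,c,d)" using ij(5) z i0 i1 j0 j1 unfolding cell_def by auto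
    qed
    show "rect (a,b,c,d) \<subseteq> (\<Union>(i, j)\<in>C. cell i j)"
    proof
      fix z assume zr: "z \<in> rect (a,b,c,d)"
      obtain x y where z: "z = (x,y)" by (cases z)
      obtain i where i: "i0 \<le> i" "i < i1" "of_int i \<le> x" "x \<le> of_int i + 1"
        using int_cover[of i0 x i1] zr z i0 i1 lt by auto
      obtain j where j: "j0 \<le> j" "j < j1" "of_int j \<le> y" "y \<le> of_int j + 1"
        using int_cover[of j0 y j1] zr z j0 j1 lt by auto
      have "z \<in> cell i j" using i j z unfolding cell_def by auto
      moreover have "(i,j) \<in> C" using i j unfolding C_def by auto
      ultimately show "z \<in> (\<Union>(i, j)\<in>C. cell i j)" by blast
    qed
  qed
  moreover have "finite C" unfolding C_def by auto
  ultimately show ?thesis unfolding is_polyomino_def by blast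
qed

lemma exist_F:
  assumes op: "orthogonal_polygon P"
  shows "\<exists>F. good P F \<and> a2 P F \<and> a3 F \<and> (is_polyomino P \<longrightarrow> intok F)"
proof -
  obtain R0 where R0: "finite R0" "R0 \<noteq> {}" "\<forall>M\<in>R0. valid M" "P = \<Union>(rect ` R0)"
    "is_polyomino P \<longrightarrow> intok R0" using base[OF op] by blast
  define X where "X = (\<lambda>(a,b,c,d). a) ` R0 \<union> (\<lambda>(a::real,b::real,c::real,d::real). c) ` R0"
  define Y where "Y = (\<lambda>(a,b,c,d). b) ` R0 \<union> (\<lambda>(a::real,b::real,c::real,d::real). d) ` R0"
  define G where "G = {(a,b,c,d). consec X a c \<and> consec Y b d \<and> (\<exists>R\<in>R0. rect (a,b,c,d) \<subseteq> rect R)}"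
  have gG: "good P G \<and> (\<forall>a b c d. (a,b,c,d) \<in> G \<longrightarrow> consec X a c) \<and> (intok R0 \<longrightarrow> intok G)"
    using grid[OF R0(1-4)] unfolding X_def Y_def G_def by blast
  define pp where "pp = is_polyomino P"
  define Q1 where "Q1 F \<longleftrightarrow> good P F \<and> (\<forall>a b c d. (a,b,c,d) \<in> F \<longrightarrow> consec X a c) \<and> (pp \<longrightarrow> intok F)" for F
  have "Q1 G" using gG R0(5) unfolding Q1_def pp_def by blast
  then obtain F1 where F1: "Q1 F1" "\<And>F. Q1 F \<Longrightarrow> card F1 \<le> card F"
    using ex_has_least_nat[of Q1 G card] by blast
  have a2F1: "a2 P F1"
    by (rule colmin_a2[of P F1 X pp]) (use F1 in \<open>auto simp: Q1_def\<close>)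
  define Q2 where "Q2 F \<longleftrightarrow> good P F \<and> a2 P F \<and> (pp \<longrightarrow> intok F)" for F
  have "Q2 F1" using F1(1) a2F1 unfolding Q1_def Q2_def by blast
  then obtain F2 where F2: "Q2 F2" "\<And>F. Q2 F \<Longrightarrow> card F2 \<le> card F"
    using ex_has_least_nat[of Q2 F1 card] by blast
  have "a3 F2"
    unfolding a3_def
  proof (intro allI impI notI)
    fix a b c d e assume m1: "(a,b,c,d) \<in> F2" and m2: "(c,b,e,d) \<in> F2"
    let ?F = "insert (a,b,e,d) (F2 - {(a,b,c,d),(c,b,e,d)})"
    have g2: "good P F2" "a2 P F2" "pp \<longrightarrow> intok F2" using F2(1) unfolding Q2_def by auto
    have m: "good P ?F" "card ?F < card F2" using hmerge_good[OF g2(1) m1 m2] by auto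
    have "a2 P ?F" using a2_hmerge[OF g2(2) m1 m2] .
    moreover have "pp \<longrightarrow> intok ?F" using g2(3) intok_merge(2)[OF _ m1 m2] by blast
    ultimately have "Q2 ?F" using m unfolding Q2_def by blast
    then show False using F2(2) m by fastforce
  qed
  then show ?thesis using F2(1) unfolding Q2_def pp_def by blast
qed

theorem corollary1:
  fixes P :: "(real \<times> real) set" and n :: nat
  assumes "orthogonal_polygon P"
    and "finite (corners P)" and "card (corners P) = n"
  shows "\<exists>S. vertical_division P S \<and> real (card (pieces P S)) \<le> 3 / 4 * real n - 2 \<and>
             (is_polyomino P \<longrightarrow> (\<forall>R\<in>pieces P S. is_polyomino R))"
proof -
  obtain F where F: "good P F" "a2 P F" "a3 F" "is_polyomino P \<longrightarrow> intok F"
    using exist_F[OF assms(1)] by blast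
  have np: "\<forall>p. quadrants_in P p \<noteq> {(1, 1), (-1, -1)} \<and> quadrants_in P p \<noteq> {(1, -1), (-1, 1)}"
    using assms(1) unfolding orthogonal_polygon_def by blast
  have T: "vertical_division P (segs F)" "pieces P (segs F) = rect ` F" using part_T[OF F(1,2)] by auto
  have val: "\<forall>M\<in>F. valid M" using F(1) unfolding good_def by auto
  have "inj_on rect F"
  proof (rule inj_onI)
    fix M N assume "M \<in> F" "N \<in> F" "rect M = rect N"
    then show "M = N" using val valid_rect_inj[of M N] by blast
  qed
  then have cp: "card (pieces P (segs F)) = card F" using T(2) card_image by simp
  have "4 * card F + 8 \<le> 3 * card (corners P)" using count[OF F(1,2,3) np assms(2)] .
  then have "4 * real (card F) + 8 \<le> 3 * real n" using assms(3) by linarith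
  then have "real (card (pieces P (segs F))) \<le> 3 / 4 * real n - 2" using cp by simp
  moreover have "is_polyomino P \<longrightarrow> (\<forall>R\<in>pieces P (segs F). is_polyomino R)"
  proof (intro impI ballI)
    fix R assume pP: "is_polyomino P" and R: "R \<in> pieces P (segs F)"
    then obtain M where M: "M \<in> F" "R = rect M" using T(2) by auto
    obtain a b c d where Md: "M = (a,b,c,d)" by (cases M)
    have "intok F" using F(4) pP by blast
    then have "a \<in> \<int>" "b \<in> \<int>" "c \<in> \<int>" "d \<in> \<int>" using M Md unfolding intok_def by auto
    moreover have "a < c" "b < d" using val M Md by auto
    ultimately show "is_polyomino R" using rect_polyomino M Md by simp
  qed
  ultimately show ?thesis using T(1) by blast
qed

end
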